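(* Let $((\Omega,\mathcal{A}),(\Omega,\mathcal{M}),t)$ be a single player type space and let $P \in \mathrm{pba}(\Omega,\mathcal{A})$ be arbitrary. Then exactly one of the following holds: (1) $P$ is $(\mathcal{M},t)$-disintegrable, i.e. $P(E\cap F)=\int_F t(\cdot,E)\,dP$ for every $E\in\mathcal{A}$ and $F\in\mathcal{M}$; (2) $P$ is a money pump, i.e. there exists $f\in B(\Omega,\mathcal{A})$ with $\int f\,dt(\omega,\cdot)\ge 0$ for all $\omega\in\Omega$ and $\int f\,dP<0$.
   Context: A field on a set $X$ is a collection of subsets of $X$ containing $X$ and closed under complements and finite intersections. For a field $\mathcal{A}$ on $\Omega$, $\mathrm{pba}(\Omega,\mathcal{A})$ denotes the set of finitely additive, nonnegative $P:\mathcal{A}\to\mathbb{R}$ with $P(\Omega)=1$ (probability charges), and $B(\Omega,\mathcal{A})$ denotes the closure in the supremum norm of the linear span of indicator functions of sets in $\mathcal{A}$; such functions have a well-defined integral against every probability charge. A single player type space $((\Omega,\mathcal{A}),(\Omega,\mathcal{M}),t)$ consists of a set $\Omega$, fields $\mathcal{M}\subseteq\mathcal{A}$ on $\Omega$, and a function $t:\Omega\times\mathcal{A}\to[0,1]$ such that (1) $t(\omega,\cdot)\in\mathrm{pba}(\Omega,\mathcal{A})$ for every $\omega$; (2) $t(\cdot,E)\in B(\Omega,\mathcal{M})$ for every $E\in\mathcal{A}$; (3) $t(\omega,E)=1$ whenever $E\in\mathcal{M}$ and $\omega\in E$. *)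

theory Defs
  imports Complex_Main "HOL-Library.Indicator_Function"
begin

definition field_on :: "'a set \<Rightarrow> 'a set set \<Rightarrow> bool" where
  "field_on X A \<longleftrightarrow> A \<subseteq> Pow X \<and> X \<in> A \<and> (\<forall>E\<in>A. X - E \<in> A)
     \<and> (\<forall>E\<in>A. \<forall>F\<in>A. E \<inter> F \<in> A)"

definition pba :: "'a set \<Rightarrow> 'a set set \<Rightarrow> ('a set \<Rightarrow> real) \<Rightarrow> bool" where
  "pba \<Omega> A P \<longleftrightarrow> (\<forall>E\<in>A. P E \<ge> 0) \<and> P \<Omega> = 1
     \<and> (\<forall>E\<in>A. \<forall>F\<in>A. E \<inter> F = {} \<longrightarrow> P (E \<union> F) = P E + P F)"

definition simple_fn :: "'a set \<Rightarrow> 'a set set \<Rightarrow> ('a \<Rightarrow> real) \<Rightarrow> bool" where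
  "simple_fn \<Omega> A g \<longleftrightarrow> (\<exists>(n::nat) (c::nat \<Rightarrow> real) (E::nat \<Rightarrow> 'a set).
      (\<forall>i<n. E i \<in> A) \<and> (\<forall>\<omega>\<in>\<Omega>. g \<omega> = (\<Sum>i<n. c i * indicator (E i) \<omega>)))"

text \<open>B(\<Omega>,A): closure of the span of indicators in the supremum norm on \<Omega>.\<close>
definition in_B :: "'a set \<Rightarrow> 'a set set \<Rightarrow> ('a \<Rightarrow> real) \<Rightarrow> bool" where
  "in_B \<Omega> A f \<longleftrightarrow> (\<forall>e>0. \<exists>g. simple_fn \<Omega> A g \<and> (\<forall>\<omega>\<in>\<Omega>. \<bar>f \<omega> - g \<omega>\<bar> \<le> e))"

definition simple_integral :: "'a set \<Rightarrow> ('a set \<Rightarrow> real) \<Rightarrow> ('a \<Rightarrow> real) \<Rightarrow> real" where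
  "simple_integral \<Omega> P g = (\<Sum>y\<in>g ` \<Omega>. y * P {\<omega>\<in>\<Omega>. g \<omega> = y})"

definition charge_integral :: "'a set \<Rightarrow> 'a set set \<Rightarrow> ('a set \<Rightarrow> real) \<Rightarrow> ('a \<Rightarrow> real) \<Rightarrow> real" where
  "charge_integral \<Omega> A P f = (THE r. \<forall>e>0. \<exists>g. simple_fn \<Omega> A g
      \<and> (\<forall>\<omega>\<in>\<Omega>. \<bar>f \<omega> - g \<omega>\<bar> \<le> e) \<and> \<bar>r - simple_integral \<Omega> P g\<bar> \<le> e)"

definition type_space :: "'a set \<Rightarrow> 'a set set \<Rightarrow> 'a set set \<Rightarrow> ('a \<Rightarrow> 'a set \<Rightarrow> real) \<Rightarrow> bool" where
  "type_space \<Omega> A M t \<longleftrightarrow> field_on \<Omega> A \<and> field_on \<Omega> M \<and> M \<subseteq> A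
     \<and> (\<forall>\<omega>\<in>\<Omega>. pba \<Omega> A (t \<omega>))
     \<and> (\<forall>E\<in>A. in_B \<Omega> M (\<lambda>\<omega>. t \<omega> E))
     \<and> (\<forall>E\<in>M. \<forall>\<omega>\<in>E. t \<omega> E = 1)"

definition disintegrable :: "'a set \<Rightarrow> 'a set set \<Rightarrow> 'a set set \<Rightarrow> ('a \<Rightarrow> 'a set \<Rightarrow> real) \<Rightarrow> ('a set \<Rightarrow> real) \<Rightarrow> bool" where
  "disintegrable \<Omega> A M t P \<longleftrightarrow> (\<forall>E\<in>A. \<forall>F\<in>M.
      P (E \<inter> F) = charge_integral \<Omega> A P (\<lambda>\<omega>. indicator F \<omega> * t \<omega> E))"

definition money_pump :: "'a set \<Rightarrow> 'a set set \<Rightarrow> ('a \<Rightarrow> 'a set \<Rightarrow> real) \<Rightarrow> ('a set \<Rightarrow> real) \<Rightarrow> bool" where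
  "money_pump \<Omega> A t P \<longleftrightarrow> (\<exists>f. in_B \<Omega> A f
      \<and> (\<forall>\<omega>\<in>\<Omega>. charge_integral \<Omega> A (t \<omega>) f \<ge> 0)
      \<and> charge_integral \<Omega> A P f < 0)"

end

theory Submission
  imports Defs
begin


lemma sum_concat_nat: "(\<Sum>i<(n1::nat)+n2. F i) = (\<Sum>i<n1. F i) + (\<Sum>i<n2. F (n1+i))"
  by (induction n2) (auto simp: add.assoc)

lemma field_sub: "field_on \<Omega> A \<Longrightarrow> E \<in> A \<Longrightarrow> E \<subseteq> \<Omega>"
  unfolding field_on_def by auto
lemma field_top: "field_on \<Omega> A \<Longrightarrow> \<Omega> \<in> A"
  unfolding field_on_def by auto
lemma field_compl: "field_on \<Omega> A \<Longrightarrow> E \<in> A \<Longrightarrow> \<Omega> - E \<in> A"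
  unfolding field_on_def by auto
lemma field_Int: "field_on \<Omega> A \<Longrightarrow> E \<in> A \<Longrightarrow> F \<in> A \<Longrightarrow> E \<inter> F \<in> A"
  unfolding field_on_def by auto
lemma field_Un: "field_on \<Omega> A \<Longrightarrow> E \<in> A \<Longrightarrow> F \<in> A \<Longrightarrow> E \<union> F \<in> A"
proof -
  assume f: "field_on \<Omega> A" and e: "E \<in> A" and ff: "F \<in> A"
  have "E \<union> F = \<Omega> - ((\<Omega> - E) \<inter> (\<Omega> - F))" using field_sub[OF f e] field_sub[OF f ff] by auto
  thus ?thesis using f e ff by (simp add: field_compl field_Int)
qed
lemma field_Diff: "field_on \<Omega> A \<Longrightarrow> E \<in> A \<Longrightarrow> F \<in> A \<Longrightarrow> E - F \<in> A"
proof -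
  assume f: "field_on \<Omega> A" and e: "E \<in> A" and ff: "F \<in> A"
  have "E - F = E \<inter> (\<Omega> - F)" using field_sub[OF f e] by auto
  thus ?thesis using f e ff by (simp add: field_compl field_Int)
qed
lemma field_empty: "field_on \<Omega> A \<Longrightarrow> {} \<in> A"
  unfolding field_on_def by (metis Diff_cancel)

lemma field_atoms:
  assumes f: "field_on \<Omega> A" and E: "\<forall>i<(n::nat). E i \<in> A"
  shows "{\<omega>\<in>\<Omega>. \<forall>i<n. (\<omega> \<in> E i) = (i \<in> S)} \<in> A"
  using E
proof (induction n)
  case 0
  then show ?case using field_top[OF f] by simp
next
  case (Suc n)
  have eq: "{\<omega>\<in>\<Omega>. \<forall>i<Suc n. (\<omega> \<in> E i) = (i \<in> S)} =
     {\<omega>\<in>\<Omega>. \<forall>i<n. (\<omega> \<in> E i) = (i \<in> S)} \<inter> (if n \<in> S then E n else \<Omega> - E n)"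
    using field_sub[OF f, of "E n"] Suc.prems by (auto simp: less_Suc_eq)
  show ?case unfolding eq using Suc f by (auto intro!: field_Int field_compl)
qed

locale charge =
  fixes \<Omega> :: "'a set" and A :: "'a set set" and P :: "'a set \<Rightarrow> real"
  assumes fld: "field_on \<Omega> A" and pb: "pba \<Omega> A P"
begin

lemma P_nonneg: "E \<in> A \<Longrightarrow> P E \<ge> 0" using pb unfolding pba_def by auto
lemma P_add: "E \<in> A \<Longrightarrow> F \<in> A \<Longrightarrow> E \<inter> F = {} \<Longrightarrow> P (E \<union> F) = P E + P F"
  using pb unfolding pba_def by auto
lemma P_Omega: "P \<Omega> = 1" using pb unfolding pba_def by auto
lemma P_empty: "P {} = 0"
  using P_add[of "{}" "{}"] field_empty[OF fld] by simp
lemma P_mono: "E \<in> A \<Longrightarrow> F \<in> A \<Longrightarrow> E \<subseteq> F \<Longrightarrow> P E \<le> P F"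
proof -
  assume e: "E \<in> A" and f: "F \<in> A" and s: "E \<subseteq> F"
  have "F = E \<union> (F - E)" using s by auto
  hence "P F = P E + P (F - E)" using P_add[of E "F - E"] e f field_Diff[OF fld f e] by auto
  thus ?thesis using P_nonneg[OF field_Diff[OF fld f e]] by simp
qed

lemma P_union:
  assumes "finite J" "B ` J \<subseteq> A" "disjoint_family_on B J"
  shows "\<Union>(B ` J) \<in> A \<and> P (\<Union>(B ` J)) = (\<Sum>j\<in>J. P (B j))"
  using assms
proof (induction J rule: finite_induct)
  case empty
  then show ?case using field_empty[OF fld] P_empty by simp
next
  case (insert x J)
  have d: "disjoint_family_on B J" using insert.prems(2) disjoint_family_on_mono[of J "insert x J"] by auto
  have IH: "\<Union>(B ` J) \<in> A \<and> P (\<Union>(B ` J)) = (\<Sum>j\<in>J. P (B j))" using insert d by auto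
  have bx: "B x \<in> A" using insert by auto
  have disj: "B x \<inter> \<Union>(B ` J) = {}" using insert.prems(2) insert.hyps(2)
    unfolding disjoint_family_on_def by auto
  have "\<Union>(B ` insert x J) = B x \<union> \<Union>(B ` J)" by auto
  then show ?case using IH bx disj P_add[OF bx, of "\<Union>(B ` J)"] field_Un[OF fld bx, of "\<Union>(B ` J)"]
    insert.hyps by simp
qed

lemma SI_partition:
  assumes J: "finite J" and BA: "B ` J \<subseteq> A" and dj: "disjoint_family_on B J"
    and cov: "\<Union>(B ` J) = \<Omega>" and val: "\<forall>j\<in>J. \<forall>\<omega>\<in>B j. g \<omega> = v j"
  shows "simple_integral \<Omega> P g = (\<Sum>j\<in>J. v j * P (B j))"
proof -
  define L where "L y = {\<omega>\<in>\<Omega>. g \<omega> = y}" for y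
  have Leq: "L y = \<Union>(B ` {j\<in>J. v j = y})" for y
    unfolding L_def using cov val by auto
  have PL: "P (L y) = (\<Sum>j\<in>{j\<in>J. v j = y}. P (B j))" for y
    unfolding Leq using P_union[of "{j\<in>J. v j = y}" B] J BA dj
    by (auto intro: disjoint_family_on_mono)
  have sub: "g ` \<Omega> \<subseteq> v ` J" using cov val by auto
  have "simple_integral \<Omega> P g = (\<Sum>y\<in>g ` \<Omega>. y * P (L y))"
    unfolding simple_integral_def L_def by simp
  also have "\<dots> = (\<Sum>y\<in>v ` J. y * P (L y))"
  proof (rule sum.mono_neutral_left)
    show "finite (v ` J)" using J by simp
    show "g ` \<Omega> \<subseteq> v ` J" by (rule sub)
    show "\<forall>i\<in>v ` J - g ` \<Omega>. i * P (L i) = 0"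
    proof
      fix y assume "y \<in> v ` J - g ` \<Omega>"
      hence "L y = {}" unfolding L_def by (auto intro: rev_image_eqI)
      thus "y * P (L y) = 0" using P_empty by simp
    qed
  qed
  also have "\<dots> = (\<Sum>y\<in>v ` J. (\<Sum>j\<in>{j\<in>J. v j = y}. v j * P (B j)))"
    unfolding PL sum_distrib_left by (auto intro!: sum.cong)
  also have "\<dots> = (\<Sum>j\<in>J. v j * P (B j))"
    using sum.image_gen[OF J, of "\<lambda>j. v j * P (B j)" v] by simp
  finally show ?thesis .
qed

end


lemma SI_cong: "(\<And>\<omega>. \<omega> \<in> \<Omega> \<Longrightarrow> g \<omega> = h \<omega>) \<Longrightarrow> simple_integral \<Omega> P g = simple_integral \<Omega> P h"
proof -
  assume e: "\<And>\<omega>. \<omega> \<in> \<Omega> \<Longrightarrow> g \<omega> = h \<omega>"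
  have "g ` \<Omega> = h ` \<Omega>" using e by auto
  moreover have "{\<omega>\<in>\<Omega>. g \<omega> = y} = {\<omega>\<in>\<Omega>. h \<omega> = y}" for y using e by auto
  ultimately show ?thesis unfolding simple_integral_def by simp
qed

lemma simple_cong: "(\<And>\<omega>. \<omega> \<in> \<Omega> \<Longrightarrow> g \<omega> = h \<omega>) \<Longrightarrow> simple_fn \<Omega> A g = simple_fn \<Omega> A h"
  unfolding simple_fn_def by simp

lemma simple_mono_field: "simple_fn \<Omega> M g \<Longrightarrow> M \<subseteq> A \<Longrightarrow> simple_fn \<Omega> A g"
  unfolding simple_fn_def by blast

lemma inB_cong: "(\<And>\<omega>. \<omega> \<in> \<Omega> \<Longrightarrow> g \<omega> = h \<omega>) \<Longrightarrow> in_B \<Omega> A g = in_B \<Omega> A h"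
  unfolding in_B_def by simp

lemma CI_cong: "(\<And>\<omega>. \<omega> \<in> \<Omega> \<Longrightarrow> g \<omega> = h \<omega>) \<Longrightarrow> charge_integral \<Omega> A P g = charge_integral \<Omega> A P h"
  unfolding charge_integral_def by simp

lemma simple_const: "field_on \<Omega> A \<Longrightarrow> simple_fn \<Omega> A (\<lambda>\<omega>. k)"
  unfolding simple_fn_def
  by (rule exI[of _ 1], rule exI[of _ "\<lambda>_. k"], rule exI[of _ "\<lambda>_. \<Omega>"]) (auto simp: field_top)

context charge
begin

lemma SI_rep:
  assumes E: "\<forall>i<(n::nat). E i \<in> A" and g: "\<forall>\<omega>\<in>\<Omega>. g \<omega> = (\<Sum>i<n. c i * indicator (E i) \<omega>)"
  shows "simple_integral \<Omega> P g = (\<Sum>i<n. c i * P (E i))"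
proof -
  define J where "J = Pow {..<n}"
  define B where "B S = {\<omega>\<in>\<Omega>. \<forall>i<n. (\<omega> \<in> E i) = (i \<in> S)}" for S
  define v where "v S = (\<Sum>i<n. c i * (if i \<in> S then 1 else 0))" for S
  have J: "finite J" unfolding J_def by simp
  have BA: "B ` J \<subseteq> A" unfolding B_def using field_atoms[OF fld E] by auto
  have dj: "disjoint_family_on B J"
    unfolding disjoint_family_on_def J_def B_def by auto
  have cov: "\<Union>(B ` J) = \<Omega>"
  proof
    show "\<Union>(B ` J) \<subseteq> \<Omega>" unfolding B_def by auto
    show "\<Omega> \<subseteq> \<Union>(B ` J)"
    proof
      fix \<omega> assume w: "\<omega> \<in> \<Omega>"
      have "\<omega> \<in> B {i. i < n \<and> \<omega> \<in> E i}" unfolding B_def using w by auto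
      moreover have "{i. i < n \<and> \<omega> \<in> E i} \<in> J" unfolding J_def by auto
      ultimately show "\<omega> \<in> \<Union>(B ` J)" by auto
    qed
  qed
  have val: "\<forall>S\<in>J. \<forall>\<omega>\<in>B S. g \<omega> = v S"
  proof (intro ballI)
    fix S \<omega> assume "S \<in> J" "\<omega> \<in> B S"
    then have w: "\<omega> \<in> \<Omega>" and m: "\<forall>i<n. (\<omega> \<in> E i) = (i \<in> S)" by (auto simp: B_def)
    have "g \<omega> = (\<Sum>i<n. c i * indicator (E i) \<omega>)" using g w by blast
    also have "\<dots> = v S" unfolding v_def by (rule sum.cong) (use m in \<open>auto simp: indicator_def\<close>)
    finally show "g \<omega> = v S" .
  qed
  have "simple_integral \<Omega> P g = (\<Sum>S\<in>J. v S * P (B S))"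
    by (rule SI_partition[OF J BA dj cov val])
  also have "\<dots> = (\<Sum>S\<in>J. \<Sum>i<n. c i * ((if i \<in> S then 1 else 0) * P (B S)))"
    unfolding v_def sum_distrib_right by (simp add: mult.assoc)
  also have "\<dots> = (\<Sum>i<n. c i * (\<Sum>S\<in>J. (if i \<in> S then 1 else 0) * P (B S)))"
    by (subst sum.swap) (simp add: sum_distrib_left)
  also have "\<dots> = (\<Sum>i<n. c i * P (E i))"
  proof (rule sum.cong[OF refl])
    fix i assume i: "i \<in> {..<n}"
    have "(\<Sum>S\<in>J. (if i \<in> S then 1 else 0) * P (B S)) = (\<Sum>S\<in>{S\<in>J. i \<in> S}. P (B S))"
    proof -
      have "(\<lambda>S. (if i \<in> S then 1 else 0) * P (B S)) = (\<lambda>S. if i \<in> S then P (B S) else 0)" by auto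
      thus ?thesis by (simp only: sum.inter_filter[OF J])
    qed
    also have "\<dots> = P (\<Union>(B ` {S\<in>J. i \<in> S}))"
    proof -
      have "B ` {S\<in>J. i \<in> S} \<subseteq> A" using BA by auto
      moreover have "disjoint_family_on B {S\<in>J. i \<in> S}" using dj by (rule disjoint_family_on_mono[rotated]) auto
      ultimately show ?thesis using P_union[of "{S\<in>J. i \<in> S}" B] J by simp
    qed
    also have "\<Union>(B ` {S\<in>J. i \<in> S}) = E i"
    proof
      show "\<Union>(B ` {S\<in>J. i \<in> S}) \<subseteq> E i" unfolding B_def using i by auto
      show "E i \<subseteq> \<Union>(B ` {S\<in>J. i \<in> S})"
      proof
        fix \<omega> assume w: "\<omega> \<in> E i"
        have wO: "\<omega> \<in> \<Omega>" using w field_sub[OF fld] E i by auto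
        have "\<omega> \<in> B {j. j < n \<and> \<omega> \<in> E j}" unfolding B_def using wO by auto
        moreover have "{j. j < n \<and> \<omega> \<in> E j} \<in> {S\<in>J. i \<in> S}" unfolding J_def using i w by auto
        ultimately show "\<omega> \<in> \<Union>(B ` {S\<in>J. i \<in> S})" by auto
      qed
    qed
    finally show "c i * (\<Sum>S\<in>J. (if i \<in> S then 1 else 0) * P (B S)) = c i * P (E i)" by simp
  qed
  finally show ?thesis .
qed

lemma SI_indicator: "E \<in> A \<Longrightarrow> simple_integral \<Omega> P (indicator E) = P E"
  using SI_rep[of 1 "\<lambda>_. E" "indicator E" "\<lambda>_. 1"] by simp

lemma SI_const: "simple_integral \<Omega> P (\<lambda>\<omega>. k) = k"
  using SI_rep[of 1 "\<lambda>_. \<Omega>" "\<lambda>_. k" "\<lambda>_. k"] field_top[OF fld] P_Omega by simp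

lemma simple_lin:
  assumes g: "simple_fn \<Omega> A g" and h: "simple_fn \<Omega> A h"
  shows "simple_fn \<Omega> A (\<lambda>\<omega>. a * g \<omega> + b * h \<omega>) \<and>
    simple_integral \<Omega> P (\<lambda>\<omega>. a * g \<omega> + b * h \<omega>) = a * simple_integral \<Omega> P g + b * simple_integral \<Omega> P h"
proof -
  obtain n1 c1 E1 where 1: "\<forall>i<(n1::nat). E1 i \<in> A" "\<forall>\<omega>\<in>\<Omega>. g \<omega> = (\<Sum>i<n1. c1 i * indicator (E1 i) \<omega>)"
    using g unfolding simple_fn_def by blast
  obtain n2 c2 E2 where 2: "\<forall>i<(n2::nat). E2 i \<in> A" "\<forall>\<omega>\<in>\<Omega>. h \<omega> = (\<Sum>i<n2. c2 i * indicator (E2 i) \<omega>)"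
    using h unfolding simple_fn_def by blast
  define c where "c i = (if i < n1 then a * c1 i else b * c2 (i - n1))" for i
  define E where "E i = (if i < n1 then E1 i else E2 (i - n1))" for i
  have EA: "\<forall>i<n1+n2. E i \<in> A" using 1 2 unfolding E_def by auto
  have split: "(\<Sum>i<n1+n2. F i) = (\<Sum>i<n1. F i) + (\<Sum>i<n2. F (n1+i))" for F :: "nat \<Rightarrow> real"
    by (rule sum_concat_nat)
  have rep: "\<forall>\<omega>\<in>\<Omega>. a * g \<omega> + b * h \<omega> = (\<Sum>i<n1+n2. c i * indicator (E i) \<omega>)"
    unfolding split using 1 2 by (auto simp: c_def E_def sum_distrib_left mult.assoc)
  have s: "simple_fn \<Omega> A (\<lambda>\<omega>. a * g \<omega> + b * h \<omega>)"
    unfolding simple_fn_def using EA rep by blast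
  have "simple_integral \<Omega> P (\<lambda>\<omega>. a * g \<omega> + b * h \<omega>) = (\<Sum>i<n1+n2. c i * P (E i))"
    using SI_rep[OF EA] rep by simp
  also have "\<dots> = a * (\<Sum>i<n1. c1 i * P (E1 i)) + b * (\<Sum>i<n2. c2 i * P (E2 i))"
    unfolding split by (simp add: c_def E_def sum_distrib_left mult.assoc)
  also have "\<dots> = a * simple_integral \<Omega> P g + b * simple_integral \<Omega> P h"
    using SI_rep[OF 1(1) 1(2)] SI_rep[OF 2(1) 2(2)] by simp
  finally show ?thesis using s by simp
qed

lemma SI_nonneg:
  assumes g: "simple_fn \<Omega> A g" and nn: "\<forall>\<omega>\<in>\<Omega>. g \<omega> \<ge> 0"
  shows "simple_integral \<Omega> P g \<ge> 0"
proof -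
  obtain n c E where 1: "\<forall>i<(n::nat). E i \<in> A" "\<forall>\<omega>\<in>\<Omega>. g \<omega> = (\<Sum>i<n. c i * indicator (E i) \<omega>)"
    using g unfolding simple_fn_def by blast
  define L where "L y = {\<omega>\<in>\<Omega>. g \<omega> = y}" for y
  define B where "B S = {\<omega>\<in>\<Omega>. \<forall>i<n. (\<omega> \<in> E i) = (i \<in> S)}" for S
  have BA: "B S \<in> A" for S unfolding B_def using field_atoms[OF fld 1(1)] by auto
  have Lu: "L y = \<Union>(B ` {S\<in>Pow {..<n}. B S \<subseteq> L y})" for y
  proof
    show "L y \<subseteq> \<Union>(B ` {S\<in>Pow {..<n}. B S \<subseteq> L y})"
    proof
      fix \<omega> assume w: "\<omega> \<in> L y"
      let ?S = "{i. i < n \<and> \<omega> \<in> E i}"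
      have "B ?S \<subseteq> L y"
      proof
        fix x assume x: "x \<in> B ?S"
        have "g x = g \<omega>" using x w 1(2) unfolding B_def L_def
          by (auto intro!: sum.cong simp: indicator_def)
        thus "x \<in> L y" using x w unfolding B_def L_def by auto
      qed
      moreover have "\<omega> \<in> B ?S" using w unfolding B_def L_def by auto
      moreover have "?S \<in> Pow {..<n}" by auto
      ultimately show "\<omega> \<in> \<Union>(B ` {S\<in>Pow {..<n}. B S \<subseteq> L y})" by auto
    qed
  qed auto
  have LA: "L y \<in> A" for y
  proof -
    have "finite {S\<in>Pow {..<n}. B S \<subseteq> L y}" by simp
    moreover have "B ` {S\<in>Pow {..<n}. B S \<subseteq> L y} \<subseteq> A" using BA by auto
    moreover have "disjoint_family_on B {S\<in>Pow {..<n}. B S \<subseteq> L y}"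
      unfolding disjoint_family_on_def B_def by auto
    ultimately show ?thesis using P_union[of "{S\<in>Pow {..<n}. B S \<subseteq> L y}" B] Lu[of y] by simp
  qed
  show ?thesis unfolding simple_integral_def
    by (rule sum_nonneg) (use nn P_nonneg LA[unfolded L_def] in auto)
qed

lemma SI_mono:
  assumes g: "simple_fn \<Omega> A g" and h: "simple_fn \<Omega> A h" and le: "\<forall>\<omega>\<in>\<Omega>. g \<omega> \<le> h \<omega>"
  shows "simple_integral \<Omega> P g \<le> simple_integral \<Omega> P h"
proof -
  have l: "simple_fn \<Omega> A (\<lambda>\<omega>. 1 * h \<omega> + (-1) * g \<omega>)"
     "simple_integral \<Omega> P (\<lambda>\<omega>. 1 * h \<omega> + (-1) * g \<omega>) = 1 * simple_integral \<Omega> P h + (-1) * simple_integral \<Omega> P g"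
    using simple_lin[OF h g, of 1 "-1"] by blast+
  have "simple_integral \<Omega> P (\<lambda>\<omega>. 1 * h \<omega> + (-1) * g \<omega>) \<ge> 0"
    by (rule SI_nonneg[OF l(1)]) (use le in auto)
  thus ?thesis using l(2) by simp
qed

lemma SI_shift:
  assumes g: "simple_fn \<Omega> A g"
  shows "simple_fn \<Omega> A (\<lambda>\<omega>. g \<omega> + k) \<and> simple_integral \<Omega> P (\<lambda>\<omega>. g \<omega> + k) = simple_integral \<Omega> P g + k"
  using simple_lin[OF g simple_const[OF fld], of 1 1 k] SI_const by simp

lemma SI_close:
  assumes g: "simple_fn \<Omega> A g" and h: "simple_fn \<Omega> A h" and le: "\<forall>\<omega>\<in>\<Omega>. g \<omega> \<le> h \<omega> + e"
  shows "simple_integral \<Omega> P g \<le> simple_integral \<Omega> P h + e"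
  using SI_mono[OF g conjunct1[OF SI_shift[OF h, of e]]] le SI_shift[OF h, of e] by simp

end


lemma eps_zero:
  fixes x K :: real
  assumes K: "K \<ge> 0" and h: "\<And>d. d > 0 \<Longrightarrow> \<bar>x\<bar> \<le> K * d"
  shows "x = 0"
proof (rule ccontr)
  assume "x \<noteq> 0"
  hence xp: "\<bar>x\<bar> > 0" by simp
  define d where "d = (\<bar>x\<bar> / 2) / (K + 1)"
  have Kp: "K + 1 > 0" using K by simp
  have dp: "d > 0" unfolding d_def using xp Kp by simp
  have "K * d \<le> (K + 1) * d" using dp by simp
  also have "(K + 1) * d = \<bar>x\<bar> / 2" unfolding d_def using Kp
    by (metis less_irrefl nonzero_mult_div_cancel_left times_divide_eq_right)
  finally have "K * d < \<bar>x\<bar>" using xp by simp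
  thus False using h[OF dp] by simp
qed

context charge
begin

lemma approx_pair:
  assumes g1: "simple_fn \<Omega> A g1" and c1: "\<forall>\<omega>\<in>\<Omega>. \<bar>f \<omega> - g1 \<omega>\<bar> \<le> e1"
    and g2: "simple_fn \<Omega> A g2" and c2: "\<forall>\<omega>\<in>\<Omega>. \<bar>f \<omega> - g2 \<omega>\<bar> \<le> e2"
  shows "simple_integral \<Omega> P g1 - e1 \<le> simple_integral \<Omega> P g2 + e2"
proof -
  have "\<forall>\<omega>\<in>\<Omega>. g1 \<omega> \<le> g2 \<omega> + (e1 + e2)"
  proof
    fix \<omega> assume w: "\<omega> \<in> \<Omega>"
    have "\<bar>f \<omega> - g1 \<omega>\<bar> \<le> e1" "\<bar>f \<omega> - g2 \<omega>\<bar> \<le> e2" using c1 c2 w by auto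
    thus "g1 \<omega> \<le> g2 \<omega> + (e1 + e2)" unfolding abs_le_iff by linarith
  qed
  from SI_close[OF g1 g2 this] show ?thesis by simp
qed

lemma CI_approx:
  assumes f: "in_B \<Omega> A f" and g: "simple_fn \<Omega> A g" and e: "e \<ge> 0"
    and c: "\<forall>\<omega>\<in>\<Omega>. \<bar>f \<omega> - g \<omega>\<bar> \<le> e"
  shows "\<bar>charge_integral \<Omega> A P f - simple_integral \<Omega> P g\<bar> \<le> e"
proof -
  define S where "S = {simple_integral \<Omega> P g - e | g e. e > 0 \<and> simple_fn \<Omega> A g \<and> (\<forall>\<omega>\<in>\<Omega>. \<bar>f \<omega> - g \<omega>\<bar> \<le> e)}"
  obtain g0 where g0: "simple_fn \<Omega> A g0" "\<forall>\<omega>\<in>\<Omega>. \<bar>f \<omega> - g0 \<omega>\<bar> \<le> 1"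
    using f[unfolded in_B_def, rule_format, of 1] by auto
  have mem: "simple_integral \<Omega> P g' - e' \<in> S" if "e' > 0" "simple_fn \<Omega> A g'" "\<forall>\<omega>\<in>\<Omega>. \<bar>f \<omega> - g' \<omega>\<bar> \<le> e'" for g' e'
    unfolding S_def mem_Collect_eq using that by blast
  have ne: "S \<noteq> {}" using mem[OF _ g0] by auto
  have bnd: "x \<le> simple_integral \<Omega> P g' + e'" if x: "x \<in> S" and g': "simple_fn \<Omega> A g'" "\<forall>\<omega>\<in>\<Omega>. \<bar>f \<omega> - g' \<omega>\<bar> \<le> e'" for x g' e'
  proof -
    obtain g1 e1 where x1: "x = simple_integral \<Omega> P g1 - e1" "simple_fn \<Omega> A g1" "\<forall>\<omega>\<in>\<Omega>. \<bar>f \<omega> - g1 \<omega>\<bar> \<le> e1"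
      using x unfolding S_def by blast
    show ?thesis unfolding x1(1) by (rule approx_pair[OF x1(2) x1(3) g'(1) g'(2)])
  qed
  have bdd: "bdd_above S"
    by (rule bdd_aboveI[of S "simple_integral \<Omega> P g0 + 1"]) (rule bnd[OF _ g0(1) g0(2)])
  define r where "r = Sup S"
  have lo: "simple_integral \<Omega> P g' - e' \<le> r" if "e' > 0" "simple_fn \<Omega> A g'" "\<forall>\<omega>\<in>\<Omega>. \<bar>f \<omega> - g' \<omega>\<bar> \<le> e'" for g' e'
  proof -
    have "simple_integral \<Omega> P g' - e' \<in> S" using mem that by blast
    thus ?thesis unfolding r_def by (rule cSup_upper[OF _ bdd])
  qed
  have hi: "r \<le> simple_integral \<Omega> P g' + e'" if "simple_fn \<Omega> A g'" "\<forall>\<omega>\<in>\<Omega>. \<bar>f \<omega> - g' \<omega>\<bar> \<le> e'" for g' e'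
    unfolding r_def by (rule cSup_least[OF ne]) (rule bnd[OF _ that(1) that(2)])
  have prp: "\<forall>e>0. \<exists>g. simple_fn \<Omega> A g \<and> (\<forall>\<omega>\<in>\<Omega>. \<bar>f \<omega> - g \<omega>\<bar> \<le> e) \<and> \<bar>r - simple_integral \<Omega> P g\<bar> \<le> e"
  proof (intro allI impI)
    fix e :: real assume ep: "e > 0"
    then obtain g where "simple_fn \<Omega> A g" "\<forall>\<omega>\<in>\<Omega>. \<bar>f \<omega> - g \<omega>\<bar> \<le> e" using f unfolding in_B_def by blast
    moreover have "\<bar>r - simple_integral \<Omega> P g\<bar> \<le> e" using lo[OF ep calculation] hi[OF calculation] by linarith
    ultimately show "\<exists>g. simple_fn \<Omega> A g \<and> (\<forall>\<omega>\<in>\<Omega>. \<bar>f \<omega> - g \<omega>\<bar> \<le> e) \<and> \<bar>r - simple_integral \<Omega> P g\<bar> \<le> e" by blast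
  qed
  have uniq: "r' = r" if h: "\<forall>e>0. \<exists>g. simple_fn \<Omega> A g \<and> (\<forall>\<omega>\<in>\<Omega>. \<bar>f \<omega> - g \<omega>\<bar> \<le> e) \<and> \<bar>r' - simple_integral \<Omega> P g\<bar> \<le> e" for r'
  proof -
    have "r' - r = 0"
    proof (rule eps_zero[of 2])
      fix d :: real assume dp: "d > 0"
      then obtain g where "simple_fn \<Omega> A g" "\<forall>\<omega>\<in>\<Omega>. \<bar>f \<omega> - g \<omega>\<bar> \<le> d" "\<bar>r' - simple_integral \<Omega> P g\<bar> \<le> d"
        using h by blast
      note gg = this
      have "simple_integral \<Omega> P g - d \<le> r" by (rule lo[OF dp gg(1) gg(2)])
      moreover have "r \<le> simple_integral \<Omega> P g + d" by (rule hi[OF gg(1) gg(2)])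
      ultimately show "\<bar>r' - r\<bar> \<le> 2 * d" using gg(3) unfolding abs_le_iff by linarith
    qed simp
    thus ?thesis by simp
  qed
  have CI: "charge_integral \<Omega> A P f = r"
    unfolding charge_integral_def
  proof (rule the_equality)
    show "\<forall>e>0. \<exists>g. simple_fn \<Omega> A g \<and> (\<forall>\<omega>\<in>\<Omega>. \<bar>f \<omega> - g \<omega>\<bar> \<le> e) \<and> \<bar>r - simple_integral \<Omega> P g\<bar> \<le> e"
      by (rule prp)
  next
    fix r' assume "\<forall>e>0. \<exists>g. simple_fn \<Omega> A g \<and> (\<forall>\<omega>\<in>\<Omega>. \<bar>f \<omega> - g \<omega>\<bar> \<le> e) \<and> \<bar>r' - simple_integral \<Omega> P g\<bar> \<le> e"
    thus "r' = r" by (rule uniq)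
  qed
  have "\<bar>r - simple_integral \<Omega> P g\<bar> \<le> e + d" if dp: "d > 0" for d
  proof -
    have cc: "\<forall>\<omega>\<in>\<Omega>. \<bar>f \<omega> - g \<omega>\<bar> \<le> e + d" 
    proof
      fix \<omega> assume "\<omega> \<in> \<Omega>"
      hence "\<bar>f \<omega> - g \<omega>\<bar> \<le> e" using c by blast
      thus "\<bar>f \<omega> - g \<omega>\<bar> \<le> e + d" using dp by linarith
    qed
    have edp: "e + d > 0" using e dp by simp
    have "simple_integral \<Omega> P g - (e + d) \<le> r" by (rule lo[OF edp g cc])
    moreover have "r \<le> simple_integral \<Omega> P g + (e + d)" by (rule hi[OF g cc])
    ultimately show ?thesis unfolding abs_le_iff by linarith
  qed
  hence "\<bar>r - simple_integral \<Omega> P g\<bar> \<le> e" by (rule field_le_epsilon) auto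
  thus ?thesis using CI by simp
qed

lemma CI_simple: "simple_fn \<Omega> A g \<Longrightarrow> in_B \<Omega> A g \<and> charge_integral \<Omega> A P g = simple_integral \<Omega> P g"
proof -
  assume g: "simple_fn \<Omega> A g"
  have b: "in_B \<Omega> A g" unfolding in_B_def using g by fastforce
  have "\<bar>charge_integral \<Omega> A P g - simple_integral \<Omega> P g\<bar> \<le> 0" by (rule CI_approx[OF b g]) auto
  thus ?thesis using b by simp
qed

lemma abs_lin_bound:
  fixes a b x y d :: real
  assumes "\<bar>x\<bar> \<le> d" "\<bar>y\<bar> \<le> d"
  shows "\<bar>a * x + b * y\<bar> \<le> (\<bar>a\<bar> + \<bar>b\<bar>) * d"
proof -
  have "\<bar>a * x + b * y\<bar> \<le> \<bar>a\<bar> * \<bar>x\<bar> + \<bar>b\<bar> * \<bar>y\<bar>" using abs_triangle_ineq[of "a*x" "b*y"] by (simp add: abs_mult)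
  also have "\<dots> \<le> \<bar>a\<bar> * d + \<bar>b\<bar> * d" using assms by (intro add_mono mult_left_mono) auto
  finally show ?thesis by (simp add: distrib_right)
qed

lemma CI_lin:
  assumes f1: "in_B \<Omega> A f1" and f2: "in_B \<Omega> A f2"
  shows "in_B \<Omega> A (\<lambda>\<omega>. a * f1 \<omega> + b * f2 \<omega>) \<and>
    charge_integral \<Omega> A P (\<lambda>\<omega>. a * f1 \<omega> + b * f2 \<omega>) = a * charge_integral \<Omega> A P f1 + b * charge_integral \<Omega> A P f2"
proof -
  have ap: "\<exists>h. simple_fn \<Omega> A h \<and> (\<forall>\<omega>\<in>\<Omega>. \<bar>(a * f1 \<omega> + b * f2 \<omega>) - h \<omega>\<bar> \<le> (\<bar>a\<bar> + \<bar>b\<bar>) * d)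
      \<and> \<bar>simple_integral \<Omega> P h - (a * charge_integral \<Omega> A P f1 + b * charge_integral \<Omega> A P f2)\<bar> \<le> (\<bar>a\<bar> + \<bar>b\<bar>) * d"
    if dp: "d > 0" for d
  proof -
    obtain g1 where g1: "simple_fn \<Omega> A g1" "\<forall>\<omega>\<in>\<Omega>. \<bar>f1 \<omega> - g1 \<omega>\<bar> \<le> d" using f1 dp unfolding in_B_def by blast
    obtain g2 where g2: "simple_fn \<Omega> A g2" "\<forall>\<omega>\<in>\<Omega>. \<bar>f2 \<omega> - g2 \<omega>\<bar> \<le> d" using f2 dp unfolding in_B_def by blast
    have l: "simple_fn \<Omega> A (\<lambda>\<omega>. a * g1 \<omega> + b * g2 \<omega>)"
      "simple_integral \<Omega> P (\<lambda>\<omega>. a * g1 \<omega> + b * g2 \<omega>) = a * simple_integral \<Omega> P g1 + b * simple_integral \<Omega> P g2"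
      using simple_lin[OF g1(1) g2(1)] by blast+
    have c: "\<forall>\<omega>\<in>\<Omega>. \<bar>(a * f1 \<omega> + b * f2 \<omega>) - (a * g1 \<omega> + b * g2 \<omega>)\<bar> \<le> (\<bar>a\<bar> + \<bar>b\<bar>) * d"
    proof
      fix \<omega> assume w: "\<omega> \<in> \<Omega>"
      have "(a * f1 \<omega> + b * f2 \<omega>) - (a * g1 \<omega> + b * g2 \<omega>) = a * (f1 \<omega> - g1 \<omega>) + b * (f2 \<omega> - g2 \<omega>)"
        by (simp add: algebra_simps)
      thus "\<bar>(a * f1 \<omega> + b * f2 \<omega>) - (a * g1 \<omega> + b * g2 \<omega>)\<bar> \<le> (\<bar>a\<bar> + \<bar>b\<bar>) * d"
        using abs_lin_bound[of "f1 \<omega> - g1 \<omega>" d "f2 \<omega> - g2 \<omega>" a b] g1(2) g2(2) w by simp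
    qed
    have i1: "\<bar>simple_integral \<Omega> P g1 - charge_integral \<Omega> A P f1\<bar> \<le> d"
      using CI_approx[OF f1 g1(1) _ g1(2)] dp by simp
    have i2: "\<bar>simple_integral \<Omega> P g2 - charge_integral \<Omega> A P f2\<bar> \<le> d"
      using CI_approx[OF f2 g2(1) _ g2(2)] dp by simp
    have "simple_integral \<Omega> P (\<lambda>\<omega>. a * g1 \<omega> + b * g2 \<omega>) - (a * charge_integral \<Omega> A P f1 + b * charge_integral \<Omega> A P f2)
       = a * (simple_integral \<Omega> P g1 - charge_integral \<Omega> A P f1) + b * (simple_integral \<Omega> P g2 - charge_integral \<Omega> A P f2)"
      unfolding l(2) by (simp add: algebra_simps)
    hence "\<bar>simple_integral \<Omega> P (\<lambda>\<omega>. a * g1 \<omega> + b * g2 \<omega>) - (a * charge_integral \<Omega> A P f1 + b * charge_integral \<Omega> A P f2)\<bar> \<le> (\<bar>a\<bar> + \<bar>b\<bar>) * d"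
      using abs_lin_bound[OF i1 i2, of a b] by simp
    thus ?thesis using l(1) c by blast
  qed
  have inb: "in_B \<Omega> A (\<lambda>\<omega>. a * f1 \<omega> + b * f2 \<omega>)"
    unfolding in_B_def
  proof (intro allI impI)
    fix e :: real assume ep: "e > 0"
    define d where "d = e / (\<bar>a\<bar> + \<bar>b\<bar> + 1)"
    have dp: "d > 0" unfolding d_def using ep by (simp add: add_nonneg_pos)
    have "(\<bar>a\<bar> + \<bar>b\<bar>) * d \<le> e"
    proof -
      have "(\<bar>a\<bar> + \<bar>b\<bar>) * d \<le> (\<bar>a\<bar> + \<bar>b\<bar> + 1) * d" using dp by simp
      also have "\<dots> = e" unfolding d_def by (simp add: add_nonneg_pos)
      finally show ?thesis .
    qed
    note le = this
    obtain h where h: "simple_fn \<Omega> A h" "\<forall>\<omega>\<in>\<Omega>. \<bar>(a * f1 \<omega> + b * f2 \<omega>) - h \<omega>\<bar> \<le> (\<bar>a\<bar> + \<bar>b\<bar>) * d"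
      using ap[OF dp] by blast
    have "\<forall>\<omega>\<in>\<Omega>. \<bar>a * f1 \<omega> + b * f2 \<omega> - h \<omega>\<bar> \<le> e" 
    proof
      fix \<omega> assume "\<omega> \<in> \<Omega>"
      hence "\<bar>a * f1 \<omega> + b * f2 \<omega> - h \<omega>\<bar> \<le> (\<bar>a\<bar> + \<bar>b\<bar>) * d" using h(2) by blast
      thus "\<bar>a * f1 \<omega> + b * f2 \<omega> - h \<omega>\<bar> \<le> e" using le by linarith
    qed
    thus "\<exists>g. simple_fn \<Omega> A g \<and> (\<forall>\<omega>\<in>\<Omega>. \<bar>a * f1 \<omega> + b * f2 \<omega> - g \<omega>\<bar> \<le> e)"
      using h(1) by blast
  qed
  have "charge_integral \<Omega> A P (\<lambda>\<omega>. a * f1 \<omega> + b * f2 \<omega>) - (a * charge_integral \<Omega> A P f1 + b * charge_integral \<Omega> A P f2) = 0"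
  proof (rule eps_zero[of "2 * (\<bar>a\<bar> + \<bar>b\<bar>)"])
    fix d :: real assume dp: "d > 0"
    obtain h where h: "simple_fn \<Omega> A h" "\<forall>\<omega>\<in>\<Omega>. \<bar>(a * f1 \<omega> + b * f2 \<omega>) - h \<omega>\<bar> \<le> (\<bar>a\<bar> + \<bar>b\<bar>) * d"
      "\<bar>simple_integral \<Omega> P h - (a * charge_integral \<Omega> A P f1 + b * charge_integral \<Omega> A P f2)\<bar> \<le> (\<bar>a\<bar> + \<bar>b\<bar>) * d"
      using ap[OF dp] by blast
    have "\<bar>charge_integral \<Omega> A P (\<lambda>\<omega>. a * f1 \<omega> + b * f2 \<omega>) - simple_integral \<Omega> P h\<bar> \<le> (\<bar>a\<bar> + \<bar>b\<bar>) * d"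
      by (rule CI_approx[OF inb h(1) _ h(2)]) (use dp in simp)
    with h(3) show "\<bar>charge_integral \<Omega> A P (\<lambda>\<omega>. a * f1 \<omega> + b * f2 \<omega>) - (a * charge_integral \<Omega> A P f1 + b * charge_integral \<Omega> A P f2)\<bar> \<le> 2 * (\<bar>a\<bar> + \<bar>b\<bar>) * d"
      by linarith
  qed simp
  thus ?thesis using inb by simp
qed

lemma CI_lower:
  assumes f: "in_B \<Omega> A f" and c: "\<forall>\<omega>\<in>\<Omega>. f \<omega> \<ge> k"
  shows "charge_integral \<Omega> A P f \<ge> k"
proof -
  have "k \<le> charge_integral \<Omega> A P f + 2 * e" if ep: "e > 0" for e
  proof -
    obtain g where g: "simple_fn \<Omega> A g" "\<forall>\<omega>\<in>\<Omega>. \<bar>f \<omega> - g \<omega>\<bar> \<le> e" using f ep unfolding in_B_def by blast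
    have "\<forall>\<omega>\<in>\<Omega>. k - e \<le> g \<omega> + 0"
    proof
      fix \<omega> assume w: "\<omega> \<in> \<Omega>"
      have "\<bar>f \<omega> - g \<omega>\<bar> \<le> e" "k \<le> f \<omega>" using g(2) c w by auto
      thus "k - e \<le> g \<omega> + 0" unfolding abs_le_iff by linarith
    qed
    from SI_close[OF simple_const[OF fld] g(1) this] have "k - e \<le> simple_integral \<Omega> P g" using SI_const by simp
    moreover have "\<bar>charge_integral \<Omega> A P f - simple_integral \<Omega> P g\<bar> \<le> e" using CI_approx[OF f g(1) _ g(2)] ep by simp
    ultimately show ?thesis by linarith
  qed
  hence "k \<le> charge_integral \<Omega> A P f + e" if "e > 0" for e
  proof -
    have "k \<le> charge_integral \<Omega> A P f + 2 * (e / 2)" using \<open>e > 0\<close> by (intro \<open>\<And>e. e > 0 \<Longrightarrow> _\<close>) simp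
    thus ?thesis by simp
  qed
  thus ?thesis by (rule field_le_epsilon) auto
qed

lemma CI_sum:
  assumes "\<forall>i<(n::nat). in_B \<Omega> A (h i)"
  shows "in_B \<Omega> A (\<lambda>\<omega>. \<Sum>i<n. c i * h i \<omega>) \<and>
    charge_integral \<Omega> A P (\<lambda>\<omega>. \<Sum>i<n. c i * h i \<omega>) = (\<Sum>i<n. c i * charge_integral \<Omega> A P (h i))"
  using assms
proof (induction n)
  case 0
  then show ?case using CI_simple[OF simple_const[OF fld, of 0]] SI_const by simp
next
  case (Suc n)
  have IH: "in_B \<Omega> A (\<lambda>\<omega>. \<Sum>i<n. c i * h i \<omega>)"
    "charge_integral \<Omega> A P (\<lambda>\<omega>. \<Sum>i<n. c i * h i \<omega>) = (\<Sum>i<n. c i * charge_integral \<Omega> A P (h i))"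
    using Suc by auto
  have e: "(\<lambda>\<omega>. \<Sum>i<Suc n. c i * h i \<omega>) = (\<lambda>\<omega>. 1 * (\<Sum>i<n. c i * h i \<omega>) + c n * h n \<omega>)" by simp
  show ?case unfolding e using CI_lin[OF IH(1), of "h n" 1 "c n"] IH(2) Suc.prems by simp
qed

end


lemma simple_ind: "field_on \<Omega> A \<Longrightarrow> E \<in> A \<Longrightarrow> simple_fn \<Omega> A (indicator E)"
  unfolding simple_fn_def
  by (rule exI[of _ 1], rule exI[of _ "\<lambda>_. 1"], rule exI[of _ "\<lambda>_. E"]) auto

lemma simple_mult_ind:
  assumes f: "field_on \<Omega> M" and F: "F \<in> M" and s: "simple_fn \<Omega> M s"
  shows "simple_fn \<Omega> M (\<lambda>\<omega>. indicator F \<omega> * s \<omega>)"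
proof -
  obtain n c E where 1: "\<forall>i<(n::nat). E i \<in> M" "\<forall>\<omega>\<in>\<Omega>. s \<omega> = (\<Sum>i<n. c i * indicator (E i) \<omega>)"
    using s unfolding simple_fn_def by blast
  have a: "\<forall>i<n. F \<inter> E i \<in> M" using 1(1) F field_Int[OF f] by auto
  have b: "\<forall>\<omega>\<in>\<Omega>. indicator F \<omega> * s \<omega> = (\<Sum>i<n. c i * indicator (F \<inter> E i) \<omega>)"
    using 1(2) by (auto simp: sum_distrib_left indicator_inter_arith algebra_simps)
  show ?thesis unfolding simple_fn_def
    by (rule exI[of _ n], rule exI[of _ c], rule exI[of _ "\<lambda>i. F \<inter> E i"]) (use a b in simp)
qed

lemma inB_mono: "in_B \<Omega> M f \<Longrightarrow> M \<subseteq> A \<Longrightarrow> in_B \<Omega> A f"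
  unfolding in_B_def using simple_mono_field by blast

locale tspace =
  fixes \<Omega> :: "'a set" and A M :: "'a set set" and t :: "'a \<Rightarrow> 'a set \<Rightarrow> real"
  assumes ts: "type_space \<Omega> A M t"
begin

lemma fA: "field_on \<Omega> A" using ts unfolding type_space_def by auto
lemma fM: "field_on \<Omega> M" using ts unfolding type_space_def by auto
lemma MA: "M \<subseteq> A" using ts unfolding type_space_def by auto
lemma tB: "E \<in> A \<Longrightarrow> in_B \<Omega> M (\<lambda>\<omega>. t \<omega> E)" using ts unfolding type_space_def by auto
lemma t1: "E \<in> M \<Longrightarrow> \<omega> \<in> E \<Longrightarrow> t \<omega> E = 1" using ts unfolding type_space_def by auto
lemma ct: "\<omega> \<in> \<Omega> \<Longrightarrow> charge \<Omega> A (t \<omega>)"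
  using ts unfolding type_space_def by (auto intro: charge.intro)

lemma t_M:
  assumes F: "F \<in> M" and w: "\<omega> \<in> \<Omega>"
  shows "t \<omega> F = indicator F \<omega>"
proof (cases "\<omega> \<in> F")
  case True
  then show ?thesis using t1[OF F] by simp
next
  case False
  interpret c: charge \<Omega> A "t \<omega>" by (rule ct[OF w])
  have FA: "F \<in> A" using F MA by auto
  have cM: "\<Omega> - F \<in> M" using field_compl[OF fM F] .
  have "t \<omega> (\<Omega> - F) = 1" using t1[OF cM] w False by simp
  moreover have "t \<omega> (F \<union> (\<Omega> - F)) = t \<omega> F + t \<omega> (\<Omega> - F)"
    by (rule c.P_add[OF FA]) (use cM MA in auto)
  moreover have "F \<union> (\<Omega> - F) = \<Omega>" using field_sub[OF fM F] by auto
  ultimately have "t \<omega> F = 0" using c.P_Omega by simp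
  thus ?thesis using False by simp
qed

lemma t_Int:
  assumes E: "E \<in> A" and F: "F \<in> M" and w: "\<omega> \<in> \<Omega>"
  shows "t \<omega> (E \<inter> F) = indicator F \<omega> * t \<omega> E"
proof -
  interpret c: charge \<Omega> A "t \<omega>" by (rule ct[OF w])
  have FA: "F \<in> A" using F MA by auto
  have cA: "\<Omega> - F \<in> A" using field_compl[OF fM F] MA by auto
  have EF: "E \<inter> F \<in> A" by (rule field_Int[OF fA E FA])
  show ?thesis
  proof (cases "\<omega> \<in> F")
    case True
    have ED: "E - F \<in> A" by (rule field_Diff[OF fA E FA])
    have "t \<omega> (\<Omega> - F) = 0" using t_M[OF field_compl[OF fM F] w] True by simp
    moreover have "t \<omega> (E - F) \<le> t \<omega> (\<Omega> - F)" using c.P_mono[OF ED cA] field_sub[OF fA E] by auto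
    moreover have "t \<omega> (E - F) \<ge> 0" using c.P_nonneg[OF ED] .
    moreover have "t \<omega> E = t \<omega> (E \<inter> F) + t \<omega> (E - F)"
    proof -
      have "E = (E \<inter> F) \<union> (E - F)" by auto
      hence "t \<omega> E = t \<omega> ((E \<inter> F) \<union> (E - F))" by simp
      also have "\<dots> = t \<omega> (E \<inter> F) + t \<omega> (E - F)" using c.P_add[OF EF ED] by auto
      finally show ?thesis .
    qed
    ultimately show ?thesis using True by simp
  next
    case False
    have "t \<omega> F = 0" using t_M[OF F w] False by simp
    moreover have "t \<omega> (E \<inter> F) \<le> t \<omega> F" using c.P_mono[OF EF FA] by auto
    moreover have "t \<omega> (E \<inter> F) \<ge> 0" using c.P_nonneg[OF EF] .
    ultimately show ?thesis using False by simp
  qed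
qed

lemma T_BM:
  assumes h: "in_B \<Omega> M h" and w: "\<omega> \<in> \<Omega>"
  shows "charge_integral \<Omega> A (t \<omega>) h = h \<omega>"
proof -
  interpret c: charge \<Omega> A "t \<omega>" by (rule ct[OF w])
  have hA: "in_B \<Omega> A h" using inB_mono[OF h MA] .
  have "charge_integral \<Omega> A (t \<omega>) h - h \<omega> = 0"
  proof (rule eps_zero[of 2])
    fix d :: real assume dp: "d > 0"
    obtain s where s: "simple_fn \<Omega> M s" "\<forall>\<omega>\<in>\<Omega>. \<bar>h \<omega> - s \<omega>\<bar> \<le> d" using h dp unfolding in_B_def by blast
    obtain n c F where 1: "\<forall>i<(n::nat). F i \<in> M" "\<forall>\<omega>\<in>\<Omega>. s \<omega> = (\<Sum>i<n. c i * indicator (F i) \<omega>)"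
      using s(1) unfolding simple_fn_def by blast
    have FA: "\<forall>i<n. F i \<in> A" using 1(1) MA by auto
    have "simple_integral \<Omega> (t \<omega>) s = (\<Sum>i<n. c i * t \<omega> (F i))" by (rule c.SI_rep[OF FA 1(2)])
    also have "\<dots> = s \<omega>" using 1 t_M w by simp
    finally have si: "simple_integral \<Omega> (t \<omega>) s = s \<omega>" .
    have "\<bar>charge_integral \<Omega> A (t \<omega>) h - simple_integral \<Omega> (t \<omega>) s\<bar> \<le> d"
      by (rule c.CI_approx[OF hA simple_mono_field[OF s(1) MA] _ s(2)]) (use dp in simp)
    moreover have "\<bar>h \<omega> - s \<omega>\<bar> \<le> d" using s(2) w by blast
    ultimately show "\<bar>charge_integral \<Omega> A (t \<omega>) h - h \<omega>\<bar> \<le> 2 * d" unfolding si by linarith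
  qed simp
  thus ?thesis by simp
qed

end



theorem theorem1:
  fixes \<Omega> :: "'a set" and A M :: "'a set set" and t :: "'a \<Rightarrow> 'a set \<Rightarrow> real"
    and P :: "'a set \<Rightarrow> real"
  assumes "type_space \<Omega> A M t"
    and "pba \<Omega> A P"
  shows "disintegrable \<Omega> A M t P \<longleftrightarrow> \<not> money_pump \<Omega> A t P"
proof -
  interpret T: tspace \<Omega> A M t by (rule tspace.intro[OF assms(1)])
  interpret C: charge \<Omega> A P by (rule charge.intro[OF T.fA assms(2)])
  show ?thesis
  proof
    assume dis: "disintegrable \<Omega> A M t P"
    show "\<not> money_pump \<Omega> A t P"
    proof
      assume "money_pump \<Omega> A t P"
      then obtain f where f: "in_B \<Omega> A f" "\<forall>\<omega>\<in>\<Omega>. charge_integral \<Omega> A (t \<omega>) f \<ge> 0"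
        "charge_integral \<Omega> A P f < 0" unfolding money_pump_def by blast
      have key: "charge_integral \<Omega> A P f \<ge> - 2 * e" if ep: "e > 0" for e
      proof -
        obtain g where g: "simple_fn \<Omega> A g" "\<forall>\<omega>\<in>\<Omega>. \<bar>f \<omega> - g \<omega>\<bar> \<le> e"
          using f(1) ep unfolding in_B_def by blast
        obtain n c E where 1: "\<forall>i<(n::nat). E i \<in> A" "\<forall>\<omega>\<in>\<Omega>. g \<omega> = (\<Sum>i<n. c i * indicator (E i) \<omega>)"
          using g(1) unfolding simple_fn_def by blast
        define h where "h \<omega> = (\<Sum>i<n. c i * t \<omega> (E i))" for \<omega>
        have tb: "\<forall>i<n. in_B \<Omega> A (\<lambda>\<omega>. t \<omega> (E i))" using 1(1) T.tB inB_mono T.MA by blast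
        have hs: "in_B \<Omega> A h \<and> charge_integral \<Omega> A P h = (\<Sum>i<n. c i * charge_integral \<Omega> A P (\<lambda>\<omega>. t \<omega> (E i)))"
          using C.CI_sum[of n "\<lambda>i \<omega>. t \<omega> (E i)" c, OF tb] unfolding h_def by simp
        have PE: "charge_integral \<Omega> A P (\<lambda>\<omega>. t \<omega> (E i)) = P (E i)" if i: "i < n" for i
        proof -
          have "P (E i \<inter> \<Omega>) = charge_integral \<Omega> A P (\<lambda>\<omega>. indicator \<Omega> \<omega> * t \<omega> (E i))"
            using dis 1(1) i field_top[OF T.fM] unfolding disintegrable_def by blast
          also have "\<dots> = charge_integral \<Omega> A P (\<lambda>\<omega>. t \<omega> (E i))" by (rule CI_cong) simp
          finally show ?thesis using field_sub[OF T.fA, of "E i"] 1(1) i by (simp add: Int_absorb2)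
        qed
        have CIh: "charge_integral \<Omega> A P h = simple_integral \<Omega> P g"
          using hs PE C.SI_rep[OF 1(1) 1(2)] by simp
        have hlow: "h \<omega> \<ge> - e" if w: "\<omega> \<in> \<Omega>" for \<omega>
        proof -
          interpret c: charge \<Omega> A "t \<omega>" by (rule T.ct[OF w])
          have "simple_integral \<Omega> (t \<omega>) g = h \<omega>" unfolding h_def by (rule c.SI_rep[OF 1(1) 1(2)])
          moreover have "\<bar>charge_integral \<Omega> A (t \<omega>) f - simple_integral \<Omega> (t \<omega>) g\<bar> \<le> e"
            by (rule c.CI_approx[OF f(1) g(1) _ g(2)]) (use ep in simp)
          moreover have "charge_integral \<Omega> A (t \<omega>) f \<ge> 0" using f(2) w by blast
          ultimately show ?thesis by linarith
        qed
        have "charge_integral \<Omega> A P h \<ge> - e" by (rule C.CI_lower) (use hs hlow in auto)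
        moreover have "\<bar>charge_integral \<Omega> A P f - simple_integral \<Omega> P g\<bar> \<le> e"
          by (rule C.CI_approx[OF f(1) g(1) _ g(2)]) (use ep in simp)
        ultimately show ?thesis using CIh by linarith
      qed
      have "charge_integral \<Omega> A P f \<ge> - 2 * (- charge_integral \<Omega> A P f / 4)"
        by (rule key) (use f(3) in simp)
      thus False using f(3) by simp
    qed
  next
    assume nmp: "\<not> money_pump \<Omega> A t P"
    have nn: "charge_integral \<Omega> A P f \<ge> 0" if "in_B \<Omega> A f" "\<forall>\<omega>\<in>\<Omega>. charge_integral \<Omega> A (t \<omega>) f \<ge> 0" for f
      using nmp that unfolding money_pump_def by force
    show "disintegrable \<Omega> A M t P"
      unfolding disintegrable_def
    proof (intro ballI)
      fix E F assume E: "E \<in> A" and F: "F \<in> M"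
      define u where "u \<omega> = indicator F \<omega> * t \<omega> E" for \<omega>
      have FA: "F \<in> A" using F T.MA by auto
      have EF: "E \<inter> F \<in> A" using field_Int[OF T.fA E FA] .
      have uM: "in_B \<Omega> M u" unfolding in_B_def
      proof (intro allI impI)
        fix e :: real assume ep: "e > 0"
        obtain s where s: "simple_fn \<Omega> M s" "\<forall>\<omega>\<in>\<Omega>. \<bar>t \<omega> E - s \<omega>\<bar> \<le> e"
          using T.tB[OF E] ep unfolding in_B_def by blast
        have "\<forall>\<omega>\<in>\<Omega>. \<bar>u \<omega> - indicator F \<omega> * s \<omega>\<bar> \<le> e"
          using s(2) ep unfolding u_def by (auto simp: indicator_def)
        thus "\<exists>g. simple_fn \<Omega> M g \<and> (\<forall>\<omega>\<in>\<Omega>. \<bar>u \<omega> - g \<omega>\<bar> \<le> e)"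
          using simple_mult_ind[OF T.fM F s(1)] by blast
      qed
      have uA: "in_B \<Omega> A u" using inB_mono[OF uM T.MA] .
      have iA: "in_B \<Omega> A (indicator (E \<inter> F))" using C.CI_simple[OF simple_ind[OF T.fA EF]] by simp
      have lin: "in_B \<Omega> A (\<lambda>\<omega>. a * indicator (E \<inter> F) \<omega> + b * u \<omega>) \<and>
          charge_integral \<Omega> A Q (\<lambda>\<omega>. a * indicator (E \<inter> F) \<omega> + b * u \<omega>) = a * Q (E \<inter> F) + b * charge_integral \<Omega> A Q u"
        if Q: "charge \<Omega> A Q" for Q a b
      proof -
        interpret q: charge \<Omega> A Q by (rule Q)
        show ?thesis using q.CI_lin[OF iA uA, of a b] q.CI_simple[OF simple_ind[OF T.fA EF]] q.SI_indicator[OF EF] by simp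
      qed
      have T0: "charge_integral \<Omega> A (t \<omega>) (\<lambda>\<omega>. a * indicator (E \<inter> F) \<omega> + b * u \<omega>) = (a + b) * t \<omega> (E \<inter> F)"
        if w: "\<omega> \<in> \<Omega>" for \<omega> a b
      proof -
        have "charge_integral \<Omega> A (t \<omega>) u = u \<omega>" by (rule T.T_BM[OF uM w])
        also have "\<dots> = t \<omega> (E \<inter> F)" unfolding u_def using T.t_Int[OF E F w] by simp
        finally show ?thesis using lin[OF T.ct[OF w], of a b] by (simp add: algebra_simps)
      qed
      have c1: "charge_integral \<Omega> A P (\<lambda>\<omega>. 1 * indicator (E \<inter> F) \<omega> + (-1) * u \<omega>) \<ge> 0"
        proof (rule nn)
        show "in_B \<Omega> A (\<lambda>\<omega>. 1 * indicator (E \<inter> F) \<omega> + (-1) * u \<omega>)"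
          using lin[OF C.charge_axioms, of 1 "-1"] by blast
        show "\<forall>\<omega>\<in>\<Omega>. charge_integral \<Omega> A (t \<omega>) (\<lambda>\<omega>. 1 * indicator (E \<inter> F) \<omega> + (-1) * u \<omega>) \<ge> 0"
          using T0[of _ 1 "-1"] by simp
      qed
      have c2: "charge_integral \<Omega> A P (\<lambda>\<omega>. (-1) * indicator (E \<inter> F) \<omega> + 1 * u \<omega>) \<ge> 0"
        proof (rule nn)
        show "in_B \<Omega> A (\<lambda>\<omega>. (-1) * indicator (E \<inter> F) \<omega> + 1 * u \<omega>)"
          using lin[OF C.charge_axioms, of "-1" 1] by blast
        show "\<forall>\<omega>\<in>\<Omega>. charge_integral \<Omega> A (t \<omega>) (\<lambda>\<omega>. (-1) * indicator (E \<inter> F) \<omega> + 1 * u \<omega>) \<ge> 0"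
          using T0[of _ "-1" 1] by simp
      qed
      have "P (E \<inter> F) = charge_integral \<Omega> A P u"
        using c1 c2 lin[OF C.charge_axioms, of 1 "-1"] lin[OF C.charge_axioms, of "-1" 1] by simp
      thus "P (E \<inter> F) = charge_integral \<Omega> A P (\<lambda>\<omega>. indicator F \<omega> * t \<omega> E)"
        unfolding u_def by simp
    qed
  qed
qed


end
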